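(* Let $\mathbb{M}^2$ be a normed plane and let $S$ be a finite set of points of $\mathbb{M}^2$ with all pairwise distances distinct. If $e$ is an edge of $\mathtt{MXST}(S)$, then at least one endpoint of $e$ lies on $\partial\mathrm{conv}(S)$.
   Context: $\mathbb{M}^2$ is $\mathbb{R}^2$ with an arbitrary norm $\|\cdot\|$. $\mathtt{MXST}(S)$ is the (unique) maximum spanning tree of the complete graph on $S$ in which the edge $\{p,q\}$ has weight $\|p-q\|$. $\partial\mathrm{conv}(S)$ is the boundary of the convex hull of $S$. *)

theory Defs
  imports "HOL-Analysis.Analysis"
begin

definition is_norm :: "(real^2 \<Rightarrow> real) \<Rightarrow> bool" where
  "is_norm N \<longleftrightarrow>
     (\<forall>x. N x = 0 \<longleftrightarrow> x = 0) \<and>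
     (\<forall>c x. N (c *\<^sub>R x) = \<bar>c\<bar> * N x) \<and>
     (\<forall>x y. N (x + y) \<le> N x + N y)"

definition complete_edges :: "'a set \<Rightarrow> 'a set set" where
  "complete_edges S = {{p, q} | p q. p \<in> S \<and> q \<in> S \<and> p \<noteq> q}"

definition is_spanning_tree :: "'a set \<Rightarrow> 'a set set \<Rightarrow> bool" where
  "is_spanning_tree S T \<longleftrightarrow>
     T \<subseteq> complete_edges S \<and>
     card T = card S - 1 \<and>
     (\<forall>p\<in>S. \<forall>q\<in>S. (p, q) \<in> {(u, v). {u, v} \<in> T}\<^sup>*)"

definition edge_weight :: "(real^2 \<Rightarrow> real) \<Rightarrow> (real^2) set \<Rightarrow> real" where
  "edge_weight N e = (THE w. \<exists>p q. e = {p, q} \<and> w = N (p - q))"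

definition is_max_spanning_tree ::
  "(real^2 \<Rightarrow> real) \<Rightarrow> (real^2) set \<Rightarrow> (real^2) set set \<Rightarrow> bool" where
  "is_max_spanning_tree N S T \<longleftrightarrow>
     is_spanning_tree S T \<and>
     (\<forall>T'. is_spanning_tree S T' \<longrightarrow>
        (\<Sum>e\<in>T'. edge_weight N e) \<le> (\<Sum>e\<in>T. edge_weight N e))"

end

theory Submission
  imports Defs
begin

definition erel :: "'a set set \<Rightarrow> ('a \<times> 'a) set" where
  "erel E = {(u, v). {u, v} \<in> E}"

lemma sym_erel: "sym (erel E)"
  unfolding erel_def sym_def by (auto simp: insert_commute)

lemma sym_erel_rtrancl: "(x, y) \<in> (erel E)\<^sup>* \<Longrightarrow> (y, x) \<in> (erel E)\<^sup>*"
proof -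
  assume "(x, y) \<in> (erel E)\<^sup>*"
  moreover have "sym ((erel E)\<^sup>*)" using sym_rtrancl[OF sym_erel] .
  ultimately show ?thesis by (meson symD)
qed

lemma finite_complete_edges: "finite S \<Longrightarrow> finite (complete_edges S)"
proof -
  assume "finite S"
  have "complete_edges S \<subseteq> Pow S" unfolding complete_edges_def by auto
  then show ?thesis using \<open>finite S\<close> finite_subset by blast
qed

lemma card_conn:
  fixes S :: "'a set" and E :: "'a set set"
  assumes fin: "finite S" and sub: "E \<subseteq> complete_edges S" and r: "r \<in> S"
    and conn: "\<forall>x\<in>S. (x, r) \<in> (erel E)\<^sup>*"
  shows "card S - 1 \<le> card E"
proof -
  define R where "R = erel E"
  define dist where "dist x = (LEAST n. (x, r) \<in> R ^^ n)" for x
  have step: "\<exists>y. (x, y) \<in> R \<and> dist y < dist x" if x: "x \<in> S - {r}" for x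
  proof -
    obtain n where n: "(x, r) \<in> R ^^ n" using conn x rtrancl_power unfolding R_def by blast
    have dx: "(x, r) \<in> R ^^ dist x" unfolding dist_def using n by (rule LeastI)
    have "dist x \<noteq> 0"
    proof
      assume "dist x = 0"
      then have "(x, r) \<in> Id" using dx by simp
      then show False using x by simp
    qed
    then obtain m where m: "dist x = Suc m" by (cases "dist x") auto
    then obtain y where y: "(x, y) \<in> R" "(y, r) \<in> R ^^ m" using dx relpow_Suc_D2 by metis
    have "dist y \<le> m" unfolding dist_def using y(2) by (rule Least_le)
    then show ?thesis using y m by auto
  qed
  define nxt where "nxt x = (SOME y. (x, y) \<in> R \<and> dist y < dist x)" for x
  have nxt: "(x, nxt x) \<in> R \<and> dist (nxt x) < dist x" if "x \<in> S - {r}" for x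
    unfolding nxt_def using someI_ex[OF step[OF that]] .
  define f where "f x = {x, nxt x}" for x
  have inj: "inj_on f (S - {r})"
  proof (rule inj_onI)
    fix x y assume xs: "x \<in> S - {r}" and ys: "y \<in> S - {r}" and fe: "f x = f y"
    show "x = y"
    proof (rule ccontr)
      assume "x \<noteq> y"
      moreover have "{x, nxt x} = {y, nxt y}" using fe unfolding f_def .
      ultimately have h: "x = nxt y \<and> y = nxt x" unfolding doubleton_eq_iff by auto
      have "dist (nxt x) < dist x" using nxt[OF xs] by blast
      then have 1: "dist y < dist x" using h by metis
      have "dist (nxt y) < dist y" using nxt[OF ys] by blast
      then have 2: "dist x < dist y" using h by metis
      show False using 1 2 by simp
    qed
  qed
  have img: "f ` (S - {r}) \<subseteq> E"
    using nxt unfolding f_def R_def erel_def by auto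
  have "finite E" using finite_complete_edges[OF fin] sub finite_subset by blast
  then have "card (S - {r}) \<le> card E" using card_inj_on_le[OF inj img] by blast
  then show ?thesis using r fin by auto
qed

lemma norm_props:
  assumes "is_norm N"
  shows "N 0 = 0" "\<And>x. N (- x) = N x" "\<And>x. N x \<ge> 0" "\<And>x y. N (x - y) = N (y - x)"
    "\<And>x. N x = 0 \<longleftrightarrow> x = 0"
proof -
  have h: "\<And>c x. N (c *\<^sub>R x) = \<bar>c\<bar> * N x" and t: "\<And>x y. N (x + y) \<le> N x + N y"
    and z: "\<And>x. N x = 0 \<longleftrightarrow> x = 0"
    using assms unfolding is_norm_def by auto
  show "N 0 = 0" using z by simp
  show n: "\<And>x. N (- x) = N x" using h[of "-1"] by simp
  show "\<And>x. N x \<ge> 0"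
  proof -
    fix x
    have "N (x + - x) \<le> N x + N (- x)" by (rule t)
    moreover have "N 0 = 0" using z by simp
    ultimately show "N x \<ge> 0" using n by simp
  qed
  show "\<And>x y. N (x - y) = N (y - x)" using n by (metis minus_diff_eq)
  show "\<And>x. N x = 0 \<longleftrightarrow> x = 0" by (rule z)
qed

lemma edge_weight_eq:
  assumes "is_norm N"
  shows "edge_weight N {a, b} = N (a - b)"
  unfolding edge_weight_def
proof (rule the_equality)
  show "\<exists>p q. {a, b} = {p, q} \<and> N (a - b) = N (p - q)" by blast
next
  fix w assume "\<exists>p q. {a, b} = {p, q} \<and> w = N (p - q)"
  then obtain p q where pq: "{a, b} = {p, q}" "w = N (p - q)" by blast
  have "N (b - a) = N (a - b)" by (rule norm_props(4)[OF assms])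
  then show "w = N (a - b)" using pq unfolding doubleton_eq_iff by metis
qed


lemma lim_aux:
  fixes X Y d :: real
  assumes d: "0 < d" and Y: "0 \<le> Y" and h: "\<And>r. 0 < r \<Longrightarrow> r < d \<Longrightarrow> X \<le> Y / r"
  shows "X \<le> Y / d"
proof (rule ccontr)
  assume "\<not> X \<le> Y / d"
  then have XY: "Y / d < X" by simp
  have X: "X > 0" using XY Y d by (smt (verit) divide_nonneg_pos)
  have "Y < X * d" using XY d by (simp add: divide_less_eq)
  then have q: "Y / X < d" using X by (simp add: divide_less_eq mult.commute)
  define r where "r = (Y / X + d) / 2"
  have r0: "0 < r" unfolding r_def using X Y d by (simp add: add_nonneg_pos)
  have gen: "\<And>w::real. w < d \<Longrightarrow> (w + d) / 2 < d" by simp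
  have rd: "r < d" unfolding r_def using gen[OF q] .
  have gen2: "\<And>w::real. w < d \<Longrightarrow> w < (w + d) / 2" by simp
  have "Y / X < r" unfolding r_def using gen2[OF q] .
  then have "Y < r * X" using X by (simp add: divide_less_eq)
  then have "Y / r < X" using r0 by (simp add: divide_less_eq mult.commute)
  then show False using h[OF r0 rd] by simp
qed

lemma norming:
  fixes N :: "real^2 \<Rightarrow> real"
  assumes N: "is_norm N" and z: "z \<noteq> 0"
  shows "\<exists>u. (\<forall>y. u \<bullet> y \<le> N y) \<and> N z \<le> u \<bullet> z"
proof -
  have h: "\<And>c x. N (c *\<^sub>R x) = \<bar>c\<bar> * N x" and t: "\<And>x y. N (x + y) \<le> N x + N y"
    using N unfolding is_norm_def by auto
  note np = norm_props[OF N]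
  define d where "d = N z"
  have d0: "d > 0" unfolding d_def using np(3)[of z] np(5)[of z] z by linarith
  define C where "C = {y. N (y + z) < d}"
  have cC: "convex C" unfolding convex_def C_def
  proof (clarsimp)
    fix x y :: "real^2" and a b :: real
    assume x: "N (x + z) < d" and y: "N (y + z) < d" and a: "0 \<le> a" and b: "0 \<le> b" and ab: "a + b = 1"
    have "a *\<^sub>R x + b *\<^sub>R y + z = a *\<^sub>R (x + z) + b *\<^sub>R (y + z)"
      using ab by (simp add: algebra_simps flip: scaleR_add_left)
    then have "N (a *\<^sub>R x + b *\<^sub>R y + z) \<le> a * N (x + z) + b * N (y + z)"
      using t h a b by (metis abs_of_nonneg)
    also have "\<dots> < d"
    proof -
      have "a * N (x + z) \<le> a * d" using a x by (simp add: mult_left_mono)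
      moreover have "b * N (y + z) \<le> b * d" using b y by (simp add: mult_left_mono)
      moreover have "a * N (x + z) < a * d \<or> b * N (y + z) < b * d"
        using ab x y a by (cases "a = 0") (auto intro: mult_strict_left_mono)
      ultimately have "a * N (x + z) + b * N (y + z) < a * d + b * d" by linarith
      also have "a * d + b * d = d" using ab by (metis distrib_right mult_1)
      finally show ?thesis .
    qed
    finally show "N (a *\<^sub>R x + b *\<^sub>R y + z) < d" .
  qed
  have "0 \<notin> C" unfolding C_def d_def by simp
  then obtain a where a: "a \<noteq> 0" "\<forall>x\<in>C. 0 \<le> inner a x"
    using separating_hyperplane_set_0[OF cC] by blast
  define u where "u = - a"
  have u0: "u \<noteq> 0" using a unfolding u_def by simp
  define K where "K = u \<bullet> z"
  have ball: "u \<bullet> w \<le> K" if "N w < d" for w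
  proof -
    have "w - z \<in> C" unfolding C_def using that by simp
    then have "0 \<le> a \<bullet> (w - z)" using a by blast
    then show ?thesis unfolding u_def K_def by (simp add: inner_diff_right)
  qed
  have K0: "K \<ge> 0" using ball[of 0] d0 np(1) by simp
  have main: "u \<bullet> y \<le> K / d * N y" for y
  proof (cases "y = 0")
    case True then show ?thesis using np(1) by simp
  next
    case False
    then have Ny: "N y > 0" using np(3)[of y] np(5)[of y] by linarith
    have "u \<bullet> y \<le> (K * N y) / r" if r: "0 < r" "r < d" for r
    proof -
      have "N ((r / N y) *\<^sub>R y) = r" using h Ny r by simp
      then have "u \<bullet> ((r / N y) *\<^sub>R y) \<le> K" using ball r(2) by metis
      then have "(r / N y) * (u \<bullet> y) \<le> K" by simp
      then have "r * (u \<bullet> y) \<le> K * N y" using Ny by (simp add: divide_le_eq mult.commute)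
      then show ?thesis using r by (simp add: le_divide_eq mult.commute)
    qed
    then have "u \<bullet> y \<le> (K * N y) / d" using lim_aux[OF d0] K0 Ny by simp
    then show ?thesis by simp
  qed
  have Kpos: "K > 0"
  proof (rule ccontr)
    assume "\<not> K > 0"
    then have "K = 0" using K0 by simp
    then have "u \<bullet> u \<le> 0" "u \<bullet> (- u) \<le> 0" using main[of u] main[of "-u"] by auto
    then have "u \<bullet> u = 0" by (metis antisym inner_ge_zero)
    then show False using u0 by simp
  qed
  define v where "v = (d / K) *\<^sub>R u"
  have "v \<bullet> y \<le> N y" for y
  proof -
    have "v \<bullet> y = (d / K) * (u \<bullet> y)" unfolding v_def by simp
    also have "\<dots> \<le> (d / K) * (K / d * N y)" using main[of y] d0 Kpos by (intro mult_left_mono) auto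
    also have "\<dots> = N y" using d0 Kpos by simp
    finally show ?thesis .
  qed
  moreover have "v \<bullet> z = N z" unfolding v_def K_def d_def using Kpos unfolding K_def by simp
  ultimately show ?thesis by (metis order_refl)
qed

lemma interior_hull_exceed:
  fixes x u :: "real^2"
  assumes x: "x \<in> interior (convex hull S)" and u: "u \<noteq> 0"
  shows "\<exists>s\<in>S. u \<bullet> x < u \<bullet> s"
proof (rule ccontr)
  assume "\<not> ?thesis"
  then have "S \<subseteq> {w. u \<bullet> w \<le> u \<bullet> x}" by auto
  then have H: "convex hull S \<subseteq> {w. u \<bullet> w \<le> u \<bullet> x}"
    by (rule hull_minimal) (rule convex_halfspace_le)
  obtain e where e: "e > 0" "ball x e \<subseteq> convex hull S" using x mem_interior by blast
  define t where "t = e / (2 * norm u)"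
  have t0: "t > 0" unfolding t_def using e u by simp
  define y where "y = x + t *\<^sub>R u"
  have "dist x y = t * norm u" unfolding y_def dist_norm using t0 by simp
  also have "\<dots> = e / 2" unfolding t_def using u by simp
  finally have "y \<in> ball x e" using e by simp
  then have "u \<bullet> y \<le> u \<bullet> x" using e H by blast
  moreover have "u \<bullet> y = u \<bullet> x + t * (u \<bullet> u)" unfolding y_def by (simp add: inner_add_right)
  moreover have "u \<bullet> u > 0" using u by simp
  ultimately show False using t0 by (smt (verit) mult_pos_pos)
qed


lemma rtrancl_stays:
  assumes "(x, y) \<in> (erel E)\<^sup>*" "x \<in> S" "E \<subseteq> complete_edges S"
  shows "y \<in> S"
  using assms(1,2)
proof (induction rule: rtrancl_induct)
  case base then show ?case .
next
  case (step y z)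
  then have "{y, z} \<in> complete_edges S" using assms(3) unfolding erel_def by auto
  then show ?case unfolding complete_edges_def by (auto simp: doubleton_eq_iff)
qed

theorem lemma3p5:
  fixes N :: "real^2 \<Rightarrow> real" and S :: "(real^2) set"
    and T :: "(real^2) set set" and e :: "(real^2) set"
  assumes "is_norm N"
    and "finite S"
    and "\<And>p q r s. p \<in> S \<Longrightarrow> q \<in> S \<Longrightarrow> r \<in> S \<Longrightarrow> s \<in> S \<Longrightarrow>
           p \<noteq> q \<Longrightarrow> r \<noteq> s \<Longrightarrow> {p, q} \<noteq> {r, s} \<Longrightarrow> N (p - q) \<noteq> N (r - s)"
    and "is_max_spanning_tree N S T"
    and "e \<in> T"
  shows "\<exists>x\<in>e. x \<in> frontier (convex hull S)"
proof -
  note N = assms(1) and fin = assms(2)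
  note np = norm_props[OF N]
  have ST: "is_spanning_tree S T" and mx: "\<And>T'. is_spanning_tree S T' \<Longrightarrow>
        (\<Sum>e\<in>T'. edge_weight N e) \<le> (\<Sum>e\<in>T. edge_weight N e)"
    using assms(4) unfolding is_max_spanning_tree_def by auto
  have Tsub: "T \<subseteq> complete_edges S" and cardT: "card T = card S - 1"
    and conn: "\<forall>x\<in>S. \<forall>y\<in>S. (x, y) \<in> (erel T)\<^sup>*"
    using ST unfolding is_spanning_tree_def erel_def by auto
  have finT: "finite T" using finite_complete_edges[OF fin] Tsub finite_subset by blast
  obtain p q where e: "e = {p, q}" and pS: "p \<in> S" and qS: "q \<in> S" and pq: "p \<noteq> q"
    using assms(5) Tsub unfolding complete_edges_def by blast
  have card2: "card S \<ge> 2"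
  proof -
    have "card {p, q} \<le> card S" using pS qS fin by (intro card_mono) auto
    then show ?thesis using pq by simp
  qed
  define T' where "T' = T - {e}"
  define A where "A = {x. (p, x) \<in> (erel T')\<^sup>*}"
  have T'sub: "T' \<subseteq> complete_edges S" using Tsub unfolding T'_def by auto
  have finT': "finite T'" using finT unfolding T'_def by simp
  have cardT': "card T' = card T - 1" unfolding T'_def using assms(5) finT by simp
  have pA: "p \<in> A" unfolding A_def by simp
  have AS: "A \<subseteq> S" unfolding A_def using rtrancl_stays[OF _ pS T'sub] by blast
  have qA: "q \<notin> A"
  proof
    assume "q \<in> A"
    then have pq': "(p, q) \<in> (erel T')\<^sup>*" unfolding A_def by simp
    have "erel T \<subseteq> (erel T')\<^sup>*"
    proof
      fix uv assume "uv \<in> erel T"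
      then obtain u v where uv: "uv = (u, v)" "{u, v} \<in> T" unfolding erel_def by auto
      show "uv \<in> (erel T')\<^sup>*"
      proof (cases "{u, v} = e")
        case True
        then have "(u = p \<and> v = q) \<or> (u = q \<and> v = p)" using e by (auto simp: doubleton_eq_iff)
        then show ?thesis using pq' sym_erel_rtrancl[OF pq'] uv by auto
      next
        case False
        then have "(u, v) \<in> erel T'" using uv unfolding T'_def erel_def by auto
        then show ?thesis using uv by auto
      qed
    qed
    then have "(erel T)\<^sup>* \<subseteq> (erel T')\<^sup>*" by (rule rtrancl_subset_rtrancl)
    then have "\<forall>x\<in>S. (x, p) \<in> (erel T')\<^sup>*" using conn pS by blast
    then have "card S - 1 \<le> card T'" using card_conn[OF fin T'sub pS] by blast
    then show False using cardT' cardT card2 by simp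
  qed
  have split: "x \<in> A \<or> (q, x) \<in> (erel T')\<^sup>*" if "x \<in> S" for x
  proof -
    have "(p, x) \<in> (erel T)\<^sup>*" using conn pS that by blast
    then show ?thesis
    proof (induction rule: rtrancl_induct)
      case base then show ?case using pA by simp
    next
      case (step y z)
      show ?case
      proof (cases "{y, z} = e")
        case True
        then have "z = p \<or> z = q" using e by (auto simp: doubleton_eq_iff)
        then show ?thesis using pA by auto
      next
        case False
        then have "(y, z) \<in> erel T'" using step(2) unfolding T'_def erel_def by auto
        then show ?thesis using step(3) unfolding A_def
          by (auto intro: rtrancl_into_rtrancl)
      qed
    qed
  qed
  have cut: "N (a - b) \<le> N (p - q)" if aA: "a \<in> A" and bS: "b \<in> S" and bA: "b \<notin> A" for a b
  proof -
    have ab: "a \<noteq> b" using aA bA by auto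
    have aS: "a \<in> S" using aA AS by auto
    define g where "g = {a, b}"
    have gT': "g \<notin> T'"
    proof
      assume "g \<in> T'"
      then have "(a, b) \<in> erel T'" unfolding g_def erel_def by auto
      then have "b \<in> A" using aA unfolding A_def by (auto intro: rtrancl_into_rtrancl)
      then show False using bA by simp
    qed
    show ?thesis
    proof (cases "g = e")
      case True
      then have "{a, b} = {p, q}" using e unfolding g_def by simp
      then have "(a = p \<and> b = q) \<or> (a = q \<and> b = p)" unfolding doubleton_eq_iff by auto
      then show ?thesis using np(4)[of q p] by auto
    next
      case False
      define T'' where "T'' = insert g T'"
      have sub'': "T'' \<subseteq> complete_edges S"
        using T'sub aS bS ab unfolding T''_def g_def complete_edges_def by auto
      have card'': "card T'' = card S - 1"
        unfolding T''_def using gT' finT' cardT' cardT card2 assms(5) finT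
        by (simp add: card_gt_0_iff)
      have mono'': "(erel T')\<^sup>* \<subseteq> (erel T'')\<^sup>*"
        by (rule rtrancl_mono) (auto simp: erel_def T''_def)
      have abR: "(a, b) \<in> (erel T'')\<^sup>*" unfolding T''_def g_def erel_def by auto
      have reach: "(p, x) \<in> (erel T'')\<^sup>*" if xS: "x \<in> S" for x
      proof (cases "x \<in> A")
        case True then show ?thesis using mono'' unfolding A_def by auto
      next
        case False
        then have qx: "(q, x) \<in> (erel T'')\<^sup>*" using split[OF xS] mono'' by auto
        have "(q, b) \<in> (erel T')\<^sup>*" using split[OF bS] bA by auto
        then have "(b, q) \<in> (erel T')\<^sup>*" by (rule sym_erel_rtrancl)
        then have bq: "(b, q) \<in> (erel T'')\<^sup>*" using mono'' by (rule subsetD[rotated])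
        have pa: "(p, a) \<in> (erel T'')\<^sup>*" using aA mono'' unfolding A_def by auto
        have "(p, b) \<in> (erel T'')\<^sup>*" using pa abR by (rule rtrancl_trans)
        then have "(p, q) \<in> (erel T'')\<^sup>*" using bq by (rule rtrancl_trans)
        then show ?thesis using qx by (rule rtrancl_trans)
      qed
      have conn'': "\<forall>x\<in>S. \<forall>y\<in>S. (x, y) \<in> {(u, v). {u, v} \<in> T''}\<^sup>*"
      proof (intro ballI)
        fix x y assume "x \<in> S" "y \<in> S"
        then have "(p, x) \<in> (erel T'')\<^sup>*" "(p, y) \<in> (erel T'')\<^sup>*"
          using reach by auto
        then have "(x, p) \<in> (erel T'')\<^sup>*" "(p, y) \<in> (erel T'')\<^sup>*"
          using sym_erel_rtrancl by auto
        then have "(x, y) \<in> (erel T'')\<^sup>*" by (rule rtrancl_trans)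
        then show "(x, y) \<in> {(u, v). {u, v} \<in> T''}\<^sup>*" unfolding erel_def .
      qed
      have "is_spanning_tree S T''" unfolding is_spanning_tree_def using sub'' card'' conn'' by blast
      then have le: "(\<Sum>e\<in>T''. edge_weight N e) \<le> (\<Sum>e\<in>T. edge_weight N e)" by (rule mx)
      have s1: "(\<Sum>e\<in>T''. edge_weight N e) = edge_weight N g + (\<Sum>e\<in>T'. edge_weight N e)"
        unfolding T''_def using finT' gT' by simp
      have s2: "(\<Sum>e\<in>T. edge_weight N e) = edge_weight N e + (\<Sum>e\<in>T'. edge_weight N e)"
        unfolding T'_def using finT assms(5) by (rule sum.remove)
      have "edge_weight N g \<le> edge_weight N e" using le s1 s2 by simp
      then show ?thesis unfolding g_def e edge_weight_eq[OF N] .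
    qed
  qed
  show ?thesis
  proof (rule ccontr)
    assume nf: "\<not> ?thesis"
    have int: "x \<in> interior (convex hull S)" if xS: "x \<in> S" and xe: "x \<in> e" for x
    proof -
      have "x \<in> convex hull S" using xS hull_subset[of S convex] by blast
      then have c: "x \<in> closure (convex hull S)" using closure_subset by blast
      have "x \<notin> frontier (convex hull S)" using nf xe by blast
      then show ?thesis using c unfolding frontier_def by blast
    qed
    have pI: "p \<in> interior (convex hull S)" using int[OF pS] e by simp
    have qI: "q \<in> interior (convex hull S)" using int[OF qS] e by simp
    have "p - q \<noteq> 0" using pq by simp
    then obtain u where u: "\<And>y. u \<bullet> y \<le> N y" and uz: "N (p - q) \<le> u \<bullet> (p - q)"
      using norming[OF N] by blast
    have d0: "N (p - q) > 0" using np(3)[of "p - q"] np(5)[of "p - q"] pq by auto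
    have u0: "u \<noteq> 0" using uz d0 by auto
    have mu0: "- u \<noteq> 0" using u0 by simp
    obtain b where bS: "b \<in> S" and b: "u \<bullet> p < u \<bullet> b" using interior_hull_exceed[OF pI u0] by blast
    obtain a where aS: "a \<in> S" and a: "(- u) \<bullet> q < (- u) \<bullet> a"
      using interior_hull_exceed[OF qI mu0] by blast
    have a': "u \<bullet> a < u \<bullet> q" using a by simp
    have duv: "u \<bullet> (p - q) = u \<bullet> p - u \<bullet> q" by (rule inner_diff_right)
    show False
    proof (cases "b \<in> A")
      case True
      have "N (b - q) \<le> N (p - q)" using cut[OF True qS qA] .
      moreover have "u \<bullet> (b - q) \<le> N (b - q)" by (rule u)
      moreover have "u \<bullet> (b - q) = u \<bullet> b - u \<bullet> q" by (rule inner_diff_right)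
      ultimately show False using b uz duv by linarith
    next
      case bA: False
      show False
      proof (cases "a \<in> A")
        case False
        have "N (p - a) \<le> N (p - q)" using cut[OF pA aS False] .
        moreover have "u \<bullet> (p - a) \<le> N (p - a)" by (rule u)
        moreover have "u \<bullet> (p - a) = u \<bullet> p - u \<bullet> a" by (rule inner_diff_right)
        ultimately show False using a' uz duv by linarith
      next
        case True
        have "N (a - b) \<le> N (p - q)" using cut[OF True bS bA] .
        moreover have "u \<bullet> (b - a) \<le> N (b - a)" by (rule u)
        moreover have "N (b - a) = N (a - b)" by (rule np(4))
        moreover have "u \<bullet> (b - a) = u \<bullet> b - u \<bullet> a" by (rule inner_diff_right)
        ultimately show False using a' b uz duv by linarith
      qed
    qed
  qed
qed

end
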